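(* Let $E/\mathbb{Q}$ be an elliptic curve without complex multiplication that has abelian entanglements, let $m$ be a positive integer with prime factorisation $m=\prod_{\ell}\ell^{\alpha_\ell}$, and for each prime $\ell\mid m$ let $S(\ell)$ be a nonempty subset of $G(\ell^{\alpha_\ell})$. Put $\mathcal{S}_m=\prod_{\ell\mid m}S(\ell)$ and $\mathcal{G}_m=\prod_{\ell\mid m}G(\ell^{\alpha_\ell})$. For each character $\tilde\chi$ of the finite abelian group $\Phi_m=\mathcal{G}_m/G(m)$ let $\chi=\tilde\chi\circ\psi_m$, where $\psi_m:\mathcal{G}_m\to\Phi_m$ is the quotient map, let $\chi_\ell$ be the restriction of $\chi$ to the factor $G(\ell^{\alpha_\ell})$, and set $E_{\chi,\ell}=\frac{1}{|S(\ell)|}\sum_{x\in S(\ell)}\chi_\ell(x)$. Then $$\frac{|\mathcal{S}_m\cap G(m)|}{|G(m)|}=\Big(1+\sum_{\tilde\chi\in\widehat{\Phi}_m\setminus\{1\}}\prod_{\ell\mid m}E_{\chi,\ell}\Big)\frac{|\mathcal{S}_m|}{|\mathcal{G}_m|}.$$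
   Context: $G(n)\leqslant\mathrm{GL}_2(\mathbb{Z}/n\mathbb{Z})$ denotes the image of the mod-$n$ Galois representation of $E$, and $G(m)$ is viewed via the Chinese remainder theorem as a subgroup of $\mathcal{G}_m$; since $E$ has abelian entanglements, $G(m)$ is normal in $\mathcal{G}_m$ with abelian quotient. $\widehat{\Phi}_m$ is the group of homomorphisms $\Phi_m\to\mathbb{C}^\times$. Definitions: let $G\leqslant\mathrm{GL}_2(\widehat{\mathbb{Z}})$ be the adelic image of $E$ and $G_{n^\infty}$ its image in $\prod_{\ell\mid n}\mathrm{GL}_2(\mathbb{Z}_\ell)$; $n$ is stable if $G_{n^\infty}$ is the full preimage of $G(n)$ under reduction, split if $G=G_{n^\infty}\times\prod_{\ell\nmid n}\mathrm{GL}_2(\mathbb{Z}_\ell)$; $m_E$ is the smallest split and stable positive integer. A subgroup $H\leqslant H_1\times\dots\times H_k$ surjecting onto each factor has abelian entanglements if for every partition $\{A,B\}$ of $\{1,\dots,k\}$ into nonempty sets the Goursat quotient $H_A/\{x\in H_A:(x,1)\in H\}$ is abelian ($H_A$ = image of $H$ in $\prod_{i\in A}H_i$). $E$ has abelian entanglements if $G(m_E)\leqslant\prod_{\ell^\alpha\|m_E}G(\ell^\alpha)$ has abelian entanglements. *)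

theory Defs
  imports "HOL-Algebra.Algebra" "HOL-Computational_Algebra.Primes" Complex_Main
begin

text \<open>Complex characters of a (finite) group \<open>\<Phi>\<close>: group homomorphisms from \<open>\<Phi>\<close>
  to the multiplicative group of nonzero complex numbers, extended by 0 outside the carrier
  (so that distinct characters are distinct functions and the set of characters is finite).\<close>
definition group_characters :: "('b, 'c) monoid_scheme \<Rightarrow> ('b \<Rightarrow> complex) set" where
  "group_characters \<Phi> =
     {c. (\<forall>x\<in>carrier \<Phi>. \<forall>y\<in>carrier \<Phi>. c (x \<otimes>\<^bsub>\<Phi>\<^esub> y) = c x * c y)
       \<and> (\<forall>x\<in>carrier \<Phi>. c x \<noteq> 0)
       \<and> (\<forall>x. x \<notin> carrier \<Phi> \<longrightarrow> c x = 0)}"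

definition trivial_character :: "('b, 'c) monoid_scheme \<Rightarrow> 'b \<Rightarrow> complex" where
  "trivial_character \<Phi> = (\<lambda>x. if x \<in> carrier \<Phi> then 1 else 0)"

definition factor_embed :: "'i set \<Rightarrow> ('i \<Rightarrow> ('a, 'c) monoid_scheme) \<Rightarrow> 'i \<Rightarrow> 'a \<Rightarrow> ('i \<Rightarrow> 'a)" where
  "factor_embed I G l x = (\<lambda>j\<in>I. if j = l then x else \<one>\<^bsub>G j\<^esub>)"

end

theory Submission
  imports Defs
begin


definition subchar :: "('b,'c) monoid_scheme \<Rightarrow> 'b set \<Rightarrow> ('b \<Rightarrow> complex) \<Rightarrow> bool" where
 "subchar G H c \<longleftrightarrow> (\<forall>x\<in>H. \<forall>y\<in>H. c (x \<otimes>\<^bsub>G\<^esub> y) = c x * c y) \<and> (\<forall>x\<in>H. c x \<noteq> 0)"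

context comm_group begin

lemma subchar_one: assumes "subgroup H G" "subchar G H c" shows "c \<one> = 1"
proof -
  have "\<one> \<in> H" using assms(1) subgroup.one_closed by blast
  then have "c \<one> = c \<one> * c \<one>" "c \<one> \<noteq> 0" using assms(2) unfolding subchar_def by force+
  then show ?thesis by simp
qed

lemma m_swap4: "h \<in> carrier G \<Longrightarrow> h' \<in> carrier G \<Longrightarrow> a \<in> carrier G \<Longrightarrow> b \<in> carrier G \<Longrightarrow>
  (h \<otimes> a) \<otimes> (h' \<otimes> b) = (h \<otimes> h') \<otimes> (a \<otimes> b)"
  by (metis m_assoc m_lcomm m_closed)

lemma closed_pow: assumes "\<one> \<in> K" "\<And>a b. a \<in> K \<Longrightarrow> b \<in> K \<Longrightarrow> a \<otimes> b \<in> K" "x \<in> K"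
  shows "x [^] (n::nat) \<in> K"
  by (induction n) (use assms in auto)

lemma subchar_pow: assumes "subgroup H G" "subchar G H c" "x \<in> H" shows "c (x [^] (n::nat)) = c x ^ n"
proof (induction n)
  case 0 then show ?case using subchar_one assms by simp
next
  case (Suc n)
  have "x [^] n \<in> H" using assms closed_pow[of H x n] by (meson subgroup.m_closed subgroup.one_closed)
  then show ?case using Suc assms unfolding subchar_def by simp
qed

lemma finite_closed_subgroup:
  assumes fin: "finite (carrier G)" and sub: "K \<subseteq> carrier G" and one: "\<one> \<in> K"
    and mult: "\<And>a b. a \<in> K \<Longrightarrow> b \<in> K \<Longrightarrow> a \<otimes> b \<in> K"
  shows "subgroup K G"
proof (rule subgroupI)
  show "K \<subseteq> carrier G" "K \<noteq> {}" using sub one by auto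
  show "a \<otimes> b \<in> K" if "a \<in> K" "b \<in> K" for a b using mult that .
  show "inv a \<in> K" if a: "a \<in> K" for a
  proof -
    have ac: "a \<in> carrier G" using a sub by auto
    have "order G > 0" using fin ac unfolding order_def by (metis card_gt_0_iff empty_iff)
    then have "a [^] (order G - 1) \<otimes> a = \<one>"
      using pow_order_eq_1[OF ac] by (metis Suc_diff_1 nat_pow_Suc)
    then have "inv a = a [^] (order G - 1)" using ac by (intro inv_equality) auto
    then show ?thesis using closed_pow[of K a "order G - 1"] one mult a by auto
  qed
qed


lemma char_step:
  assumes fin: "finite (carrier G)" and H: "subgroup H G" and c: "subchar G H c" and g: "g \<in> carrier G"
    and k: "k > 0" "g [^] k \<in> H" "\<And>d. 0 < d \<Longrightarrow> d < k \<Longrightarrow> g [^] d \<notin> H"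
    and z: "z ^ k = c (g [^] k)"
  defines "K \<equiv> {h \<otimes> g [^] i | h i. h \<in> H \<and> i < k}"
  shows "subgroup K G \<and> H \<subseteq> K \<and> (1 < k \<longrightarrow> g \<in> K) \<and>
    (\<exists>c'. subchar G K c' \<and> (\<forall>x\<in>H. c' x = c x) \<and> (1 < k \<longrightarrow> c' g = z))"
proof -
  have Hc: "H \<subseteq> carrier G" using subgroup.subset[OF H] .
  have Hm: "a \<otimes> b \<in> H" if "a \<in> H" "b \<in> H" for a b using subgroup.m_closed[OF H that] .
  have Hi: "inv a \<in> H" if "a \<in> H" for a using subgroup.m_inv_closed[OF H that] .
  have H1: "\<one> \<in> H" using subgroup.one_closed[OF H] .
  have uniq0: "i = j \<and> h = h'" if "h \<in> H" "h' \<in> H" "i < k" "j < k" "i \<le> j"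
      "h \<otimes> g [^] i = h' \<otimes> g [^] j" for h h' i j
  proof -
    have hc: "h \<in> carrier G" "h' \<in> carrier G" using that Hc by auto
    have "g [^] j = g [^] i \<otimes> g [^] (j - i)" using g that(5) nat_pow_mult[of g i "j - i"] by simp
    then have "h \<otimes> g [^] i = (h' \<otimes> g [^] (j - i)) \<otimes> g [^] i"
      using that(6) hc g by (metis m_assoc m_comm nat_pow_closed)
    then have e: "h = h' \<otimes> g [^] (j - i)" using hc g by (meson m_closed nat_pow_closed right_cancel)
    then have "g [^] (j - i) = inv h' \<otimes> h" using hc g
      by (metis inv_solve_left nat_pow_closed)
    then have "g [^] (j - i) \<in> H" using Hm Hi that by auto
    then have "j - i = 0" using k(3)[of "j - i"] that by linarith
    then show ?thesis using e hc that(5) by simp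
  qed
  have uniq: "i = j \<and> h = h'" if "h \<in> H" "h' \<in> H" "i < k" "j < k"
      "h \<otimes> g [^] i = h' \<otimes> g [^] j" for h h' i j
  proof (cases "i \<le> j")
    case True then show ?thesis using uniq0 that by blast
  next
    case False then show ?thesis using uniq0[of h' h j i] that by auto
  qed
  have Kc: "K \<subseteq> carrier G" unfolding K_def using Hc g by auto
  have HK: "H \<subseteq> K"
  proof
    fix x assume "x \<in> H" then have "x = x \<otimes> g [^] (0::nat) \<and> x \<in> H \<and> (0::nat) < k" using Hc k by auto
    then show "x \<in> K" unfolding K_def by blast
  qed
  have gK: "g \<in> K" if "1 < k"
  proof -
    have "g = \<one> \<otimes> g [^] (1::nat)" using g by simp
    then show ?thesis unfolding K_def using H1 that by blast
  qed
  have prod: "(h \<otimes> g [^] i) \<otimes> (h' \<otimes> g [^] j) = (h \<otimes> h') \<otimes> g [^] (i + j)"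
    if "h \<in> H" "h' \<in> H" for h h' and i j :: nat
    proof -
    have hc: "h \<in> carrier G" "h' \<in> carrier G" using that Hc by auto
    have "(h \<otimes> g [^] i) \<otimes> (h' \<otimes> g [^] j) = (h \<otimes> h') \<otimes> (g [^] i \<otimes> g [^] j)"
      by (rule m_swap4) (use hc g in auto)
    also have "\<dots> = (h \<otimes> h') \<otimes> g [^] (i + j)" using g by (simp only: nat_pow_mult)
    finally show ?thesis .
  qed
  have split: "g [^] (i + j) = g [^] k \<otimes> g [^] (i + j - k)" if "k \<le> i + j" for i j :: nat
    using that g nat_pow_mult[of g k "i + j - k"] by simp
  have Kmult: "a \<otimes> b \<in> K" if "a \<in> K" "b \<in> K" for a b
  proof -
    obtain h i where a: "a = h \<otimes> g [^] i" "h \<in> H" "i < k" using \<open>a \<in> K\<close> unfolding K_def by blast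
    obtain h' j where b: "b = h' \<otimes> g [^] j" "h' \<in> H" "j < k" using \<open>b \<in> K\<close> unfolding K_def by blast
    show ?thesis
    proof (cases "i + j < k")
      case True then show ?thesis unfolding K_def a b prod[OF a(2) b(2)] using Hm a b by blast
    next
      case False
      then have "a \<otimes> b = ((h \<otimes> h') \<otimes> g [^] k) \<otimes> g [^] (i + j - k)"
        proof -
        have e: "g [^] (i + j) = g [^] k \<otimes> g [^] (i + j - k)" using split[of i j] False by simp
        show ?thesis unfolding a b prod[OF a(2) b(2)] e using a b Hc g by (simp add: m_assoc subsetD)
      qed
      moreover have "(h \<otimes> h') \<otimes> g [^] k \<in> H" using Hm a b k by auto
      moreover have "i + j - k < k" using a b by linarith
      ultimately show ?thesis unfolding K_def by blast
    qed
  qed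
  have K1: "\<one> \<in> K" using HK H1 by auto
  have subK: "subgroup K G" using finite_closed_subgroup[OF fin Kc K1 Kmult] by blast
  define rep where "rep y = (SOME p. fst p \<in> H \<and> snd p < k \<and> y = fst p \<otimes> g [^] snd p)" for y
  define c' where "c' y = c (fst (rep y)) * z ^ snd (rep y)" for y
  have c'eq: "c' (h \<otimes> g [^] i) = c h * z ^ i" if "h \<in> H" "i < k" for h i
  proof -
    let ?P = "\<lambda>p. fst p \<in> H \<and> snd p < k \<and> h \<otimes> g [^] i = fst p \<otimes> g [^] snd p"
    have "?P (h, i)" using that by simp
    then have "?P (rep (h \<otimes> g [^] i))" unfolding rep_def by (rule someI)
    then have "rep (h \<otimes> g [^] i) = (h, i)" using uniq[OF that(1) _ that(2)] by (metis prod.collapse)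
    then show ?thesis unfolding c'_def by simp
  qed
  have cm: "c (a \<otimes> b) = c a * c b" if "a \<in> H" "b \<in> H" for a b using c that unfolding subchar_def by blast
  have cnz: "c a \<noteq> 0" if "a \<in> H" for a using c that unfolding subchar_def by blast
  have znz: "z \<noteq> 0" using z cnz[OF k(2)] k(1) by (metis zero_power)
  have "subchar G K c'"
    unfolding subchar_def
  proof (intro conjI ballI)
    fix a b assume "a \<in> K" "b \<in> K"
    obtain h i where a: "a = h \<otimes> g [^] i" "h \<in> H" "i < k" using \<open>a \<in> K\<close> unfolding K_def by blast
    obtain h' j where b: "b = h' \<otimes> g [^] j" "h' \<in> H" "j < k" using \<open>b \<in> K\<close> unfolding K_def by blast
    show "c' (a \<otimes> b) = c' a * c' b"
    proof (cases "i + j < k")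
      case True then show ?thesis unfolding a b prod[OF a(2) b(2)] using Hm a b
        by (simp add: c'eq cm power_add)
    next
      case False
      then have ab: "a \<otimes> b = ((h \<otimes> h') \<otimes> g [^] k) \<otimes> g [^] (i + j - k)"
        proof -
        have e: "g [^] (i + j) = g [^] k \<otimes> g [^] (i + j - k)" using split[of i j] False by simp
        show ?thesis unfolding a b prod[OF a(2) b(2)] e using a b Hc g by (simp add: m_assoc subsetD)
      qed
      have "c' (a \<otimes> b) = c (h \<otimes> h') * c (g [^] k) * z ^ (i + j - k)"
        unfolding ab using Hm a b k False by (simp add: c'eq cm)
      also have "\<dots> = c h * c h' * z ^ (k + (i + j - k))" using a b z cm by (simp add: power_add)
      also have "k + (i + j - k) = i + j" using False by simp
      finally show ?thesis using a b by (simp add: c'eq power_add)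
    qed
  next
    fix a assume "a \<in> K"
    then obtain h i where a: "a = h \<otimes> g [^] i" "h \<in> H" "i < k" unfolding K_def by blast
    then show "c' a \<noteq> 0" using c'eq cnz znz by simp
  qed
  moreover have "\<forall>x\<in>H. c' x = c x"
  proof
    fix x assume "x \<in> H"
    then have "c' (x \<otimes> g [^] (0::nat)) = c x * z ^ 0" using c'eq k by blast
    moreover have "x \<otimes> \<one> = x" using \<open>x \<in> H\<close> Hc by (simp add: subsetD)
    ultimately show "c' x = c x" by simp
  qed
  moreover have "1 < k \<longrightarrow> c' g = z"
  proof
    assume "1 < k"
    then have "c' (\<one> \<otimes> g [^] (1::nat)) = c \<one> * z ^ 1" using c'eq H1 by blast
    then show "c' g = z" using g subchar_one[OF H c] by simp
  qed
  ultimately show ?thesis using subK HK gK by blast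
qed

end

context comm_group begin

lemma char_extend:
  assumes fin: "finite (carrier G)"
  shows "subgroup H G \<Longrightarrow> subchar G H c \<Longrightarrow> \<exists>c'. subchar G (carrier G) c' \<and> (\<forall>x\<in>H. c' x = c x)"
proof (induction "card (carrier G) - card H" arbitrary: H c rule: less_induct)
  case less
  note H = less.prems(1) and cH = less.prems(2)
  show ?case
  proof (cases "H = carrier G")
    case True then show ?thesis using cH by (intro exI[of _ c]) simp
  next
    case False
    have Hc: "H \<subseteq> carrier G" using subgroup.subset[OF H] .
    then obtain g where g: "g \<in> carrier G" "g \<notin> H" using False by blast
    have opos: "order G > 0" using fin g(1) unfolding order_def by (auto simp: card_gt_0_iff)
    have ex: "\<exists>d::nat. 0 < d \<and> g [^] d \<in> H"
    proof -
      have "g [^] order G \<in> H" using pow_order_eq_1[OF g(1)] subgroup.one_closed[OF H] by simp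
      then show ?thesis using opos by blast
    qed
    define k where "k = (LEAST d::nat. 0 < d \<and> g [^] d \<in> H)"
    have k: "0 < k" "g [^] k \<in> H" using LeastI_ex[OF ex] unfolding k_def by auto
    have kmin: "g [^] d \<notin> H" if "0 < d" "d < k" for d :: nat
      using not_less_Least[of d "\<lambda>d::nat. 0 < d \<and> g [^] d \<in> H"] that unfolding k_def by blast
    have "k \<noteq> 1"
    proof
      assume "k = 1"
      then have "g [^] (1::nat) \<in> H" using k(2) by simp
      moreover have "g [^] (1::nat) = g" using g(1) by simp
      ultimately show False using g(2) by simp
    qed
    then have k1: "1 < k" using k(1) by linarith
    have cnz: "c (g [^] k) \<noteq> 0" using cH k unfolding subchar_def by blast
    have "card {z::complex. z ^ k = c (g [^] k)} = k" using card_nth_roots[OF cnz k(1)] .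
    then obtain z :: complex where z: "z ^ k = c (g [^] k)" using k(1)
    proof -
      have "{z::complex. z ^ k = c (g [^] k)} \<noteq> {}" using \<open>card _ = k\<close> k(1) by (intro notI) simp
      then show ?thesis using that by blast
    qed
    define K where "K = {h \<otimes> g [^] i | h i. h \<in> H \<and> i < k}"
    have st: "subgroup K G \<and> H \<subseteq> K \<and> (1 < k \<longrightarrow> g \<in> K) \<and>
      (\<exists>c'. subchar G K c' \<and> (\<forall>x\<in>H. c' x = c x) \<and> (1 < k \<longrightarrow> c' g = z))"
      unfolding K_def by (rule char_step[OF fin H cH g(1) k kmin z])
    have K: "subgroup K G" and HK: "H \<subseteq> K" and gK: "1 < k \<longrightarrow> g \<in> K"
      and ex': "\<exists>c'. subchar G K c' \<and> (\<forall>x\<in>H. c' x = c x) \<and> (1 < k \<longrightarrow> c' g = z)"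
      using st by simp_all
    obtain c' where c': "subchar G K c'" "\<forall>x\<in>H. c' x = c x" using ex' by (elim exE conjE)
    have Kc: "K \<subseteq> carrier G" using subgroup.subset[OF K] .
    have "g \<in> K" using gK k1 by (rule mp)
    then have "H \<subset> K" using HK g(2) by blast
    then have "card H < card K" using Kc fin by (meson finite_subset psubset_card_mono)
    moreover have "card K \<le> card (carrier G)" using Kc fin by (simp add: card_mono)
    ultimately have "card (carrier G) - card K < card (carrier G) - card H" by linarith
    from less.hyps[OF this K c'(1)] obtain c'' where
      "subchar G (carrier G) c''" "\<forall>x\<in>K. c'' x = c' x" by blast
    moreover have "\<forall>x\<in>H. c'' x = c x" using calculation(2) c'(2) HK by auto
    ultimately show ?thesis by blast
  qed
qed

lemma char_sep:
  assumes fin: "finite (carrier G)" and x: "x \<in> carrier G" "x \<noteq> \<one>"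
  shows "\<exists>c. subchar G (carrier G) c \<and> c x \<noteq> 1"
proof -
  define H where "H = {\<one>}"
  have H: "subgroup H G" unfolding H_def by (rule triv_subgroup)
  have cH: "subchar G H (\<lambda>_. 1)" unfolding subchar_def by simp
  have opos: "order G > 0" using fin x(1) unfolding order_def by (auto simp: card_gt_0_iff)
  have ex: "\<exists>d::nat. 0 < d \<and> x [^] d \<in> H"
    using pow_order_eq_1[OF x(1)] opos unfolding H_def by blast
  define k where "k = (LEAST d::nat. 0 < d \<and> x [^] d \<in> H)"
  have k: "0 < k" "x [^] k \<in> H" using LeastI_ex[OF ex] unfolding k_def by auto
  have kmin: "x [^] d \<notin> H" if "0 < d" "d < k" for d :: nat
    using not_less_Least[of d "\<lambda>d::nat. 0 < d \<and> x [^] d \<in> H"] that unfolding k_def by blast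
  have "k \<noteq> 1"
  proof
    assume "k = 1"
    then have "x [^] (1::nat) \<in> H" using k(2) by simp
    moreover have "x [^] (1::nat) = x" using x(1) by simp
    ultimately show False using x(2) unfolding H_def by simp
  qed
  then have k1: "1 < k" using k(1) by linarith
  have "card {z::complex. z ^ k = 1} = k" using card_roots_unity_eq[OF k(1)] .
  then have "{z::complex. z ^ k = 1} \<noteq> {1}" using k1 by auto
  moreover have "1 \<in> {z::complex. z ^ k = 1}" by simp
  ultimately obtain z :: complex where z: "z ^ k = 1" "z \<noteq> 1" by blast
  have z': "z ^ k = (\<lambda>_. 1) (x [^] k)" using z by simp
  define K where "K = {h \<otimes> x [^] i | h i. h \<in> H \<and> i < k}"
  have st: "subgroup K G \<and> H \<subseteq> K \<and> (1 < k \<longrightarrow> x \<in> K) \<and>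
      (\<exists>c'. subchar G K c' \<and> (\<forall>y\<in>H. c' y = 1) \<and> (1 < k \<longrightarrow> c' x = z))"
    unfolding K_def by (rule char_step[OF fin H cH x(1) k kmin z'])
  have K: "subgroup K G" and xK0: "1 < k \<longrightarrow> x \<in> K"
      and ex': "\<exists>c'. subchar G K c' \<and> (\<forall>y\<in>H. c' y = 1) \<and> (1 < k \<longrightarrow> c' x = z)"
      using st by simp_all
  have xK: "x \<in> K" using xK0 k1 by (rule mp)
  obtain c' where c': "subchar G K c'" "1 < k \<longrightarrow> c' x = z" using ex' by (elim exE conjE)
  have c'x: "c' x = z" using c'(2) k1 by (rule mp)
  obtain c'' where "subchar G (carrier G) c''" "c'' x = c' x"
    using char_extend[OF fin K c'(1)] xK by blast
  then show ?thesis using c'x z by auto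
qed

lemma gc_iff: "c \<in> group_characters G \<longleftrightarrow> subchar G (carrier G) c \<and> (\<forall>x. x \<notin> carrier G \<longrightarrow> c x = 0)"
  unfolding group_characters_def subchar_def by blast

lemma gc_one: "c \<in> group_characters G \<Longrightarrow> c \<one> = 1"
  using subchar_one[OF subgroup_self] gc_iff by blast

lemma gc_sep:
  assumes fin: "finite (carrier G)" and x: "x \<in> carrier G" "x \<noteq> \<one>"
  shows "\<exists>c\<in>group_characters G. c x \<noteq> 1"
proof -
  obtain c where c: "subchar G (carrier G) c" "c x \<noteq> 1" using char_sep[OF assms] by blast
  define c' where "c' y = (if y \<in> carrier G then c y else 0)" for y
  have "c' \<in> group_characters G" using c unfolding gc_iff subchar_def c'_def by auto
  moreover have "c' x \<noteq> 1" using c x unfolding c'_def by auto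
  ultimately show ?thesis by blast
qed

lemma gc_finite:
  assumes fin: "finite (carrier G)"
  shows "finite (group_characters G)"
proof -
  define n where "n = order G"
  have npos: "n > 0" using fin one_closed unfolding n_def order_def by (auto simp: card_gt_0_iff)
  have "group_characters G \<subseteq> {f. \<forall>x. (x \<in> carrier G \<longrightarrow> f x \<in> {z::complex. z ^ n = 1}) \<and> (x \<notin> carrier G \<longrightarrow> f x = 0)}"
  proof (safe)
    fix c x assume c: "c \<in> group_characters G" and x: "x \<in> carrier G"
    have sc: "subchar G (carrier G) c" using c gc_iff by blast
    have "c (x [^] n) = c x ^ n" using subchar_pow[OF subgroup_self sc x] .
    moreover have "x [^] n = \<one>" using pow_order_eq_1[OF x] unfolding n_def .
    ultimately show "c x ^ n = 1" using gc_one[OF c] by simp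
  next
    fix c x assume "c \<in> group_characters G" "x \<notin> carrier G"
    then show "c x = 0" using gc_iff by blast
  qed
  moreover have fr: "finite {z::complex. z ^ n = 1}" using finite_roots_unity[of n] npos by simp
  moreover have "finite {f. \<forall>x. (x \<in> carrier G \<longrightarrow> f x \<in> {z::complex. z ^ n = 1}) \<and> (x \<notin> carrier G \<longrightarrow> f x = (0::complex))}"
    by (rule finite_set_of_finite_funs[OF fin fr])
  ultimately show ?thesis using finite_subset by blast
qed

lemma gc_mult:
  assumes "c \<in> group_characters G" "d \<in> group_characters G"
  shows "(\<lambda>x. c x * d x) \<in> group_characters G"
  using assms unfolding group_characters_def by auto

lemma gc_triv: "trivial_character G \<in> group_characters G"
  unfolding group_characters_def trivial_character_def by auto

lemma gc_sum_x:
  assumes fin: "finite (carrier G)" and x: "x \<in> carrier G" "x \<noteq> \<one>"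
  shows "(\<Sum>c\<in>group_characters G. c x) = 0"
proof -
  let ?X = "group_characters G"
  obtain c0 where c0: "c0 \<in> ?X" "c0 x \<noteq> 1" using gc_sep[OF assms] by blast
  define f where "f c = (\<lambda>y. c0 y * c y)" for c
  have fX: "f ` ?X \<subseteq> ?X" using gc_mult[OF c0(1)] unfolding f_def by blast
  have inj: "inj_on f ?X"
  proof (rule inj_onI)
    fix c d assume c: "c \<in> ?X" and d: "d \<in> ?X" and e: "f c = f d"
    show "c = d"
    proof
      fix y show "c y = d y"
      proof (cases "y \<in> carrier G")
        case True
        have "subchar G (carrier G) c0" using c0(1) gc_iff by simp
        then have "c0 y \<noteq> 0" using True unfolding subchar_def by simp
        moreover have "c0 y * c y = c0 y * d y" using e unfolding f_def by meson
        ultimately show ?thesis by simp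
      next
        case False then show ?thesis using c d unfolding gc_iff by simp
      qed
    qed
  qed
  have finX: "finite ?X" using gc_finite[OF fin] .
  have "f ` ?X = ?X" using card_subset_eq[OF finX fX] card_image[OF inj] by simp
  then have "(\<Sum>c\<in>?X. c x) = (\<Sum>c\<in>f ` ?X. c x)" by simp
  also have "\<dots> = (\<Sum>c\<in>?X. f c x)" using sum.reindex[OF inj] by simp
  also have "\<dots> = c0 x * (\<Sum>c\<in>?X. c x)" unfolding f_def by (simp add: sum_distrib_left)
  finally have "(1 - c0 x) * (\<Sum>c\<in>?X. c x) = 0" by (simp add: algebra_simps)
  then show ?thesis using c0(2) by simp
qed

lemma gc_sum_c:
  assumes c: "c \<in> group_characters G" "c \<noteq> trivial_character G"
  shows "(\<Sum>x\<in>carrier G. c x) = 0"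
proof -
  have "\<exists>y\<in>carrier G. c y \<noteq> 1"
  proof (rule ccontr)
    assume "\<not> ?thesis"
    then have "c = trivial_character G"
    proof -
      assume a: "\<not> (\<exists>y\<in>carrier G. c y \<noteq> 1)"
      have z: "\<forall>x. x \<notin> carrier G \<longrightarrow> c x = 0" using c(1) unfolding gc_iff by simp
      show ?thesis unfolding trivial_character_def
      proof
        fix x show "c x = (if x \<in> carrier G then 1 else 0)" using a z by (cases "x \<in> carrier G") auto
      qed
    qed
    then show False using c(2) by simp
  qed
  then obtain y where y: "y \<in> carrier G" "c y \<noteq> 1" by blast
  have sc: "subchar G (carrier G) c" using c gc_iff by blast
  have "(\<Sum>x\<in>carrier G. c x) = (\<Sum>x\<in>carrier G. c (y \<otimes> x))"
    by (rule sum.reindex_bij_witness[where i = "\<lambda>x. y \<otimes> x" and j = "\<lambda>x. inv y \<otimes> x"])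
       (use y in \<open>simp_all add: m_assoc[symmetric]\<close>)
  also have "\<dots> = c y * (\<Sum>x\<in>carrier G. c x)" using sc y unfolding subchar_def by (simp add: sum_distrib_left)
  finally have "(1 - c y) * (\<Sum>x\<in>carrier G. c x) = 0" by (simp add: algebra_simps)
  then show ?thesis using y(2) by simp
qed

lemma gc_card:
  assumes fin: "finite (carrier G)"
  shows "card (group_characters G) = order G"
proof -
  let ?X = "group_characters G"
  have finX: "finite ?X" using gc_finite[OF fin] .
  have "(\<Sum>c\<in>?X. \<Sum>x\<in>carrier G. c x) = (\<Sum>c\<in>?X. if c = trivial_character G then of_nat (order G) else 0)"
  proof (rule sum.cong[OF refl])
    fix c assume c: "c \<in> ?X"
    show "(\<Sum>x\<in>carrier G. c x) = (if c = trivial_character G then of_nat (order G) else 0)"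
      using gc_sum_c[OF c] unfolding trivial_character_def order_def by simp
  qed
  also have "\<dots> = of_nat (order G)" using finX gc_triv by (simp add: sum.delta')
  finally have 1: "(\<Sum>c\<in>?X. \<Sum>x\<in>carrier G. c x) = of_nat (order G)" .
  have "(\<Sum>x\<in>carrier G. \<Sum>c\<in>?X. c x) = (\<Sum>x\<in>carrier G. if x = \<one> then of_nat (card ?X) else 0)"
  proof (rule sum.cong[OF refl])
    fix x assume x: "x \<in> carrier G"
    show "(\<Sum>c\<in>?X. c x) = (if x = \<one> then of_nat (card ?X) else 0)"
    proof (cases "x = \<one>")
      case True
      have "(\<Sum>c\<in>?X. c x) = (\<Sum>c\<in>?X. 1)" using gc_one True by (intro sum.cong) auto
      then show ?thesis using True by simp
    next
      case False then show ?thesis using gc_sum_x[OF fin x] by simp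
    qed
  qed
  also have "\<dots> = of_nat (card ?X)" using fin by (simp add: sum.delta')
  finally have 2: "(\<Sum>x\<in>carrier G. \<Sum>c\<in>?X. c x) = (of_nat (card ?X) :: complex)" .
  have "(\<Sum>c\<in>?X. \<Sum>x\<in>carrier G. c x) = (\<Sum>x\<in>carrier G. \<Sum>c\<in>?X. c x)" by (rule sum.swap)
  then have "(of_nat (card ?X) :: complex) = of_nat (order G)" using 1 2 by simp
  then show ?thesis by simp
qed

lemma gc_orth:
  assumes fin: "finite (carrier G)" and x: "x \<in> carrier G"
  shows "(\<Sum>c\<in>group_characters G. c x) = (if x = \<one> then of_nat (order G) else 0)"
proof (cases "x = \<one>")
  case True
  have "(\<Sum>c\<in>group_characters G. c x) = (\<Sum>c\<in>group_characters G. 1)"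
    using gc_one True by (intro sum.cong) auto
  then show ?thesis using True gc_card[OF fin] by simp
next
  case False then show ?thesis using gc_sum_x[OF fin x] by simp
qed

end


lemma char_prod_decomp:
  fixes G :: "'i \<Rightarrow> ('a, 'z) monoid_scheme" and N :: "('i \<Rightarrow> 'a) set"
  assumes I: "finite I" and grp: "\<And>i. i \<in> I \<Longrightarrow> group (G i)"
    and nor: "normal N (product_group I G)"
    and cg: "comm_group (product_group I G Mod N)"
    and c: "c \<in> group_characters (product_group I G Mod N)"
    and s: "s \<in> carrier (product_group I G)"
  shows "c (N #>\<^bsub>product_group I G\<^esub> s) =
    (\<Prod>l\<in>I. c (N #>\<^bsub>product_group I G\<^esub> factor_embed I G l (s l)))"
proof -
  define P where "P = product_group I G"
  define \<Phi> where "\<Phi> = P Mod N"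
  define \<psi> where "\<psi> x = N #>\<^bsub>P\<^esub> x" for x
  interpret Pg: group P unfolding P_def using grp by simp
  interpret Nn: normal N P using nor unfolding P_def .
  interpret Phi: comm_group \<Phi> using cg unfolding \<Phi>_def P_def .
  have cP: "carrier P = (\<Pi>\<^sub>E i\<in>I. carrier (G i))" unfolding P_def by simp
  have sc: "s i \<in> carrier (G i)" if "i \<in> I" for i using s that unfolding P_def by auto
  have psic: "\<psi> x \<in> carrier \<Phi>" if "x \<in> carrier P" for x
    using that unfolding \<psi>_def \<Phi>_def carrier_FactGroup by blast
  have psim: "\<psi> (x \<otimes>\<^bsub>P\<^esub> y) = \<psi> x \<otimes>\<^bsub>\<Phi>\<^esub> \<psi> y" if "x \<in> carrier P" "y \<in> carrier P" for x y
    using Nn.rcos_sum[OF that] unfolding \<psi>_def \<Phi>_def by (simp add: FactGroup_def)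
  have cs: "subchar \<Phi> (carrier \<Phi>) c" using Phi.gc_iff c unfolding \<Phi>_def P_def by simp
  have cm: "c (\<psi> (x \<otimes>\<^bsub>P\<^esub> y)) = c (\<psi> x) * c (\<psi> y)" if "x \<in> carrier P" "y \<in> carrier P" for x y
    using cs psic[OF that(1)] psic[OF that(2)] unfolding psim[OF that] subchar_def by blast
  have c1: "c (\<psi> \<one>\<^bsub>P\<^esub>) = 1"
  proof -
    have "\<psi> \<one>\<^bsub>P\<^esub> = \<one>\<^bsub>\<Phi>\<^esub>" unfolding \<psi>_def \<Phi>_def by (simp add: Nn.subgroup_axioms Pg.coset_join2)
    then show ?thesis using Phi.gc_one c unfolding \<Phi>_def P_def by simp
  qed
  define sJ where "sJ J = (\<lambda>j\<in>I. if j \<in> J then s j else \<one>\<^bsub>G j\<^esub>)" for J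
  have sJc: "sJ J \<in> carrier P" for J
    unfolding sJ_def cP using sc grp by (auto simp: group.is_monoid monoid.one_closed)
  have ec: "factor_embed I G l x \<in> carrier P" if "l \<in> I" "x \<in> carrier (G l)" for l x
    unfolding factor_embed_def cP using that grp by (auto simp: group.is_monoid monoid.one_closed)
  have step: "sJ (insert l J) = sJ J \<otimes>\<^bsub>P\<^esub> factor_embed I G l (s l)" if "l \<in> I" "l \<notin> J" for l J
  proof
    fix j
    show "sJ (insert l J) j = (sJ J \<otimes>\<^bsub>P\<^esub> factor_embed I G l (s l)) j"
    proof (cases "j \<in> I")
      case True
      have gj: "group (G j)" using grp True .
      have "\<one>\<^bsub>G l\<^esub> \<otimes>\<^bsub>G l\<^esub> s l = s l"
        using monoid.l_one[OF group.is_monoid[OF grp[OF that(1)]] sc[OF that(1)]] .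
      then show ?thesis using True that sc[OF True] unfolding sJ_def factor_embed_def P_def
        by (auto simp: group.is_monoid monoid.l_one monoid.r_one gj monoid.one_closed)
    next
      case False then show ?thesis unfolding sJ_def P_def by simp
    qed
  qed
  have ind: "finite J \<Longrightarrow> J \<subseteq> I \<Longrightarrow> c (\<psi> (sJ J)) = (\<Prod>l\<in>J. c (\<psi> (factor_embed I G l (s l))))" for J
  proof (induction J rule: finite_induct)
    case empty
    have "sJ {} = \<one>\<^bsub>P\<^esub>" unfolding sJ_def P_def by simp
    then show ?case using c1 by simp
  next
    case (insert l J)
    then have l: "l \<in> I" "J \<subseteq> I" by auto
    have "c (\<psi> (sJ (insert l J))) = c (\<psi> (sJ J)) * c (\<psi> (factor_embed I G l (s l)))"
      unfolding step[OF l(1) insert(2)] using cm sJc ec[OF l(1) sc[OF l(1)]] by blast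
    then show ?case using insert l by simp
  qed
  have "sJ I = s" using s unfolding sJ_def P_def by (auto simp: PiE_def extensional_def)
  then show ?thesis using ind[OF I subset_refl] unfolding \<psi>_def P_def by simp
qed



theorem theorem3p4:
  fixes m :: nat
    and G :: "nat \<Rightarrow> 'a monoid"   \<comment> \<open>\<open>G \<ell>\<close> stands for \<open>G(\<ell>^\<alpha>\<^sub>\<ell>)\<close>\<close>
    and Gm :: "(nat \<Rightarrow> 'a) set"   \<comment> \<open>\<open>G(m)\<close>, viewed inside \<open>\<G>\<^sub>m\<close> via CRT\<close>
    and S :: "nat \<Rightarrow> 'a set"
  defines "\<G> \<equiv> product_group (prime_factors m) G"
    and "\<Phi> \<equiv> product_group (prime_factors m) G Mod Gm"
    and "\<S> \<equiv> (\<Pi>\<^sub>E l\<in>prime_factors m. S l)"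
  assumes "m > 0"
    and "\<And>l. l \<in> prime_factors m \<Longrightarrow> group (G l)"
    and "\<And>l. l \<in> prime_factors m \<Longrightarrow> finite (carrier (G l))"
    and "subgroup Gm \<G>"
    and "\<And>l. l \<in> prime_factors m \<Longrightarrow> (\<lambda>g. g l) ` Gm = carrier (G l)"
    and "Gm \<lhd> \<G>"
    and "comm_group \<Phi>"
    and "\<And>l. l \<in> prime_factors m \<Longrightarrow> S l \<subseteq> carrier (G l)"
    and "\<And>l. l \<in> prime_factors m \<Longrightarrow> S l \<noteq> {}"
  shows "(of_nat (card (\<S> \<inter> Gm)) / of_nat (card Gm) :: complex) =
    (1 + (\<Sum>c \<in> group_characters \<Phi> - {trivial_character \<Phi>}.
           \<Prod>l\<in>prime_factors m.
             (1 / of_nat (card (S l))) *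
             (\<Sum>x\<in>S l. c (Gm #>\<^bsub>\<G>\<^esub> factor_embed (prime_factors m) G l x))))
    * of_nat (card \<S>) / of_nat (card (carrier \<G>))"
proof -
  define I where "I = prime_factors m"
  define \<psi> where "\<psi> x = Gm #>\<^bsub>\<G>\<^esub> x" for x
  define Xc where "Xc = group_characters \<Phi>"
  define e where "e = factor_embed (prime_factors m) G"
  have finI: "finite I" unfolding I_def by simp
  have grp: "group (G l)" if "l \<in> I" for l using assms(5) that unfolding I_def .
  have finG: "finite (carrier (G l))" if "l \<in> I" for l using assms(6) that unfolding I_def .
  have SG: "S l \<subseteq> carrier (G l)" if "l \<in> I" for l using assms(11) that unfolding I_def .
  have Sne: "S l \<noteq> {}" if "l \<in> I" for l using assms(12) that unfolding I_def .
  have finS: "finite (S l)" if "l \<in> I" for l using finite_subset[OF SG[OF that] finG[OF that]] .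
  have cardS: "card (S l) > 0" if "l \<in> I" for l using finS[OF that] Sne[OF that] by (simp add: card_gt_0_iff)
  have GI: "\<G> = product_group I G" unfolding \<G>_def I_def ..
  have PhiE: "\<Phi> = \<G> Mod Gm" unfolding \<Phi>_def \<G>_def ..
  interpret Gg: group \<G> unfolding GI using grp by simp
  interpret Nn: normal Gm \<G> using assms(9) .
  interpret Phi: comm_group \<Phi> using assms(10) .
  have cG: "carrier \<G> = (\<Pi>\<^sub>E i\<in>I. carrier (G i))" unfolding GI by simp
  have finGG: "finite (carrier \<G>)" unfolding cG using finI finG by (simp add: finite_PiE)
  have cPhi: "carrier \<Phi> = (\<lambda>x. Gm #>\<^bsub>\<G>\<^esub> x) ` carrier \<G>" unfolding PhiE carrier_FactGroup ..
  have finPhi: "finite (carrier \<Phi>)" unfolding cPhi using finGG by simp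
  have lag: "order \<Phi> * card Gm = order \<G>"
    using Gg.lagrange[OF Nn.subgroup_axioms] unfolding PhiE order_def by (simp add: FactGroup_def)
  have SS: "\<S> \<subseteq> carrier \<G>" unfolding \<S>_def cG I_def[symmetric] using SG by (auto simp: PiE_def Pi_def)
  have finSS: "finite \<S>" using finite_subset[OF SS finGG] .
  have cardSS: "card \<S> = (\<Prod>l\<in>I. card (S l))" unfolding \<S>_def I_def[symmetric] using finI by (simp add: card_PiE)
  have cardSS0: "card \<S> \<noteq> 0" unfolding cardSS using cardS finI by simp
  have psic: "\<psi> x \<in> carrier \<Phi>" if "x \<in> carrier \<G>" for x using that unfolding cPhi \<psi>_def by blast
  have psi1: "\<psi> x = \<one>\<^bsub>\<Phi>\<^esub> \<longleftrightarrow> x \<in> Gm" if "x \<in> carrier \<G>" for x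
    unfolding \<psi>_def PhiE one_FactGroup
    using Gg.coset_join1[OF _ that Nn.subgroup_axioms] Gg.coset_join2[OF that Nn.subgroup_axioms] by blast
  have finX: "finite Xc" unfolding Xc_def using Phi.gc_finite[OF finPhi] .
  have trivX: "trivial_character \<Phi> \<in> Xc" unfolding Xc_def by (rule Phi.gc_triv)
  have decomp: "c (\<psi> s) = (\<Prod>l\<in>I. c (\<psi> (e l (s l))))" if "c \<in> Xc" "s \<in> carrier \<G>" for c s
    using char_prod_decomp[OF finI grp, where N = Gm and c = c and s = s] assms(9,10) that
    unfolding \<psi>_def e_def Xc_def GI PhiE I_def by simp
  define F where "F c = ((1 / of_nat (card \<S>)) * (\<Sum>s\<in>\<S>. c (\<psi> s)) :: complex)" for c
  have termeq: "(\<Prod>l\<in>prime_factors m. (1 / of_nat (card (S l))) *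
             (\<Sum>x\<in>S l. c (Gm #>\<^bsub>\<G>\<^esub> factor_embed (prime_factors m) G l x))) = F c"
    if c: "c \<in> Xc" for c
  proof -
    have "(\<Sum>s\<in>\<S>. c (\<psi> s)) = (\<Sum>s\<in>\<S>. \<Prod>l\<in>I. c (\<psi> (e l (s l))))"
      using decomp[OF c] SS by (intro sum.cong) auto
    also have "\<dots> = (\<Prod>l\<in>I. \<Sum>x\<in>S l. c (\<psi> (e l x)))"
      unfolding \<S>_def I_def[symmetric] by (rule prod_sum_PiE[symmetric]) (use finI finS in auto)
    finally have 1: "(\<Sum>s\<in>\<S>. c (\<psi> s)) = (\<Prod>l\<in>I. \<Sum>x\<in>S l. c (\<psi> (e l x)))" .
    have 2: "(\<Prod>l\<in>I. (1 / of_nat (card (S l)) :: complex)) = 1 / of_nat (card \<S>)"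
      unfolding cardSS by (simp add: prod_dividef)
    have "F c = (\<Prod>l\<in>I. (1 / of_nat (card (S l)) :: complex)) * (\<Prod>l\<in>I. \<Sum>x\<in>S l. c (\<psi> (e l x)))"
      unfolding F_def 1 2 ..
    also have "\<dots> = (\<Prod>l\<in>I. (1 / of_nat (card (S l))) * (\<Sum>x\<in>S l. c (\<psi> (e l x))))"
      by (rule prod.distrib[symmetric])
    finally show ?thesis unfolding I_def e_def \<psi>_def by simp
  qed
  have Ftriv: "F (trivial_character \<Phi>) = 1"
  proof -
    have "(\<Sum>s\<in>\<S>. trivial_character \<Phi> (\<psi> s)) = (\<Sum>s\<in>\<S>. (1::complex))"
      using psic SS unfolding trivial_character_def by (intro sum.cong) auto
    then show ?thesis unfolding F_def using cardSS0 by simp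
  qed
  have "(\<Sum>c\<in>Xc. F c) = (1 / of_nat (card \<S>)) * (\<Sum>s\<in>\<S>. \<Sum>c\<in>Xc. c (\<psi> s))"
    unfolding F_def by (simp add: sum_distrib_left sum.swap[of _ Xc])
  also have "(\<Sum>s\<in>\<S>. \<Sum>c\<in>Xc. c (\<psi> s)) = (\<Sum>s\<in>\<S>. if s \<in> Gm then of_nat (order \<Phi>) else 0)"
  proof (intro sum.cong refl)
    fix s assume s: "s \<in> \<S>"
    then have sc: "s \<in> carrier \<G>" using SS by blast
    show "(\<Sum>c\<in>Xc. c (\<psi> s)) = (if s \<in> Gm then of_nat (order \<Phi>) else 0)"
      unfolding Xc_def Phi.gc_orth[OF finPhi psic[OF sc]] using psi1[OF sc] by simp
  qed
  also have "\<dots> = of_nat (order \<Phi>) * of_nat (card (\<S> \<inter> Gm))"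
  proof -
    have "(\<Sum>s\<in>\<S>. if s \<in> Gm then (of_nat (order \<Phi>) :: complex) else 0) = (\<Sum>s\<in>{s\<in>\<S>. s \<in> Gm}. of_nat (order \<Phi>))"
      using sum.inter_filter[OF finSS, of "\<lambda>_. (of_nat (order \<Phi>) :: complex)" "\<lambda>s. s \<in> Gm"] by simp
    also have "{s\<in>\<S>. s \<in> Gm} = \<S> \<inter> Gm" by blast
    finally show ?thesis by simp
  qed
  finally have sumF: "(\<Sum>c\<in>Xc. F c) = (1 / of_nat (card \<S>)) * (of_nat (order \<Phi>) * of_nat (card (\<S> \<inter> Gm)))" .
  have "1 + (\<Sum>c \<in> Xc - {trivial_character \<Phi>}. F c) = (\<Sum>c\<in>Xc. F c)"
    using sum.remove[OF finX trivX, of F] Ftriv by simp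
  moreover have "(\<Sum>c \<in> group_characters \<Phi> - {trivial_character \<Phi>}.
           \<Prod>l\<in>prime_factors m.
             (1 / of_nat (card (S l))) *
             (\<Sum>x\<in>S l. c (Gm #>\<^bsub>\<G>\<^esub> factor_embed (prime_factors m) G l x))) =
     (\<Sum>c \<in> Xc - {trivial_character \<Phi>}. F c)"
    unfolding Xc_def[symmetric] using termeq by (intro sum.cong refl) auto
  ultimately have R: "(1 + (\<Sum>c \<in> group_characters \<Phi> - {trivial_character \<Phi>}.
           \<Prod>l\<in>prime_factors m.
             (1 / of_nat (card (S l))) *
             (\<Sum>x\<in>S l. c (Gm #>\<^bsub>\<G>\<^esub> factor_embed (prime_factors m) G l x)))) =
     (1 / of_nat (card \<S>)) * (of_nat (order \<Phi>) * of_nat (card (\<S> \<inter> Gm)))"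
    using sumF by simp
  have oPhi: "order \<Phi> \<noteq> 0" using finPhi Phi.one_closed unfolding order_def by (auto simp: card_gt_0_iff)
  have cGm: "card Gm \<noteq> 0" using lag oPhi finGG Gg.one_closed unfolding order_def
    by (metis card_gt_0_iff empty_iff mult_0_right not_gr_zero)
  have cGG: "(of_nat (card (carrier \<G>)) :: complex) = of_nat (order \<Phi>) * of_nat (card Gm)"
    using lag unfolding order_def[of \<G>] by (metis of_nat_mult)
  show ?thesis unfolding R cGG using cardSS0 oPhi cGm by (simp add: field_simps)
qed

end
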